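(* Let $n=3$ and $\kappa=1$. For all $u,v\in\mathcal A_3^*$, $$u\equiv_{\mathrm{knu}}v\iff\big(\mho(u)=\mho(v)\ \text{and}\ \Omega(u)=\Omega(v)\big).$$ Equivalently, $w\mapsto(\mho(w),\Omega(w))$ induces an injective monoid homomorphism from the plactic monoid $\mathcal P_3=\mathcal A_3^*/{\equiv_{\mathrm{knu}}}$ into $\mathrm{TMat}_3(\mathbb T)\times\mathrm{TMat}_3(\mathbb T)$.
   Context: $\mathcal A_3=\{a_1<a_2<a_3\}$; $\equiv_{\mathrm{knu}}$ is the congruence generated by $xzy=zxy$ ($x\le y<z$) and $yxz=yzx$ ($x<y\le z$). Max-plus semiring $\mathbb T=\mathbb R\cup\{-\infty\}$, product $(X\odot Y)_{i,j}=\max_t(x_{i,t}+y_{t,j})$; $\mathrm{TMat}_3(\mathbb T)$ the upper triangular $3\times3$ matrices. $\mho,\Omega$ are the monoid homomorphisms with $\mho(e)=\Omega(e)=E$, $\mho(a_\ell)=A^{(\ell)}$, $\Omega(a_\ell)=\check A^{(\ell)}$, where $E_{i,j}=0$ ($i\le j$), $-\infty$ ($i>j$); $A^{(\ell)}_{i,j}=1$ if $i\le\ell\le j$, $0$ if $i\le j$ otherwise, $-\infty$ if $i>j$; $\check A^{(\ell)}_{4-\ell,4-\ell}=-1$, $\check A^{(\ell)}_{i,j}=0$ for all other $i\le j$, $-\infty$ for $i>j$. *)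

theory Defs
  imports Complex_Main "HOL-Library.Extended_Real"
begin

text \<open>Words over the alphabet A_3 = {1 < 2 < 3} are lists of naturals with letters in {1,2,3}.\<close>

inductive knuth_equiv :: "nat list \<Rightarrow> nat list \<Rightarrow> bool" where
  knu_refl: "knuth_equiv w w"
| knu_sym: "knuth_equiv u v \<Longrightarrow> knuth_equiv v u"
| knu_trans: "knuth_equiv u v \<Longrightarrow> knuth_equiv v w \<Longrightarrow> knuth_equiv u w"
| knu1: "x \<le> y \<Longrightarrow> y < z \<Longrightarrow> knuth_equiv (p @ [x, z, y] @ q) (p @ [z, x, y] @ q)"
| knu2: "x < y \<Longrightarrow> y \<le> z \<Longrightarrow> knuth_equiv (p @ [y, x, z] @ q) (p @ [y, z, x] @ q)"

text \<open>Tropical (max-plus) 3x3 matrices: entries in ereal (only reals and -\<infinity> occur),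
  indexed by 1..3; entries outside the index range are fixed to -\<infinity>.\<close>

type_synonym tmat = "nat \<Rightarrow> nat \<Rightarrow> ereal"

definition tmult :: "tmat \<Rightarrow> tmat \<Rightarrow> tmat" where
  "tmult X Y = (\<lambda>i j. if i \<in> {1..3} \<and> j \<in> {1..3}
       then Max ((\<lambda>t. X i t + Y t j) ` {1..3}) else -\<infinity>)"

definition tE :: tmat where
  "tE = (\<lambda>i j. if i \<in> {1..3} \<and> j \<in> {1..3} then (if i \<le> j then 0 else -\<infinity>) else -\<infinity>)"

definition tA :: "nat \<Rightarrow> tmat" where
  "tA l = (\<lambda>i j. if i \<in> {1..3} \<and> j \<in> {1..3} then
      (if i \<le> j then (if i \<le> l \<and> l \<le> j then 1 else 0) else -\<infinity>) else -\<infinity>)"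

definition tAcheck :: "nat \<Rightarrow> tmat" where
  "tAcheck l = (\<lambda>i j. if i \<in> {1..3} \<and> j \<in> {1..3} then
      (if i \<le> j then (if i = 4 - l \<and> j = 4 - l then -1 else 0) else -\<infinity>) else -\<infinity>)"

definition mho :: "nat list \<Rightarrow> tmat" where
  "mho w = foldr (\<lambda>a M. tmult (tA a) M) w tE"

definition Omega :: "nat list \<Rightarrow> tmat" where
  "Omega w = foldr (\<lambda>a M. tmult (tAcheck a) M) w tE"

end

theory Submission
  imports Defs
begin


datatype ut = U real real real real real real

fun mul :: "ut \<Rightarrow> ut \<Rightarrow> ut" where
  "mul (U a11 a12 a13 a22 a23 a33) (U b11 b12 b13 b22 b23 b33) =
    U (a11+b11) (max (a11+b12) (a12+b22)) (max (max (a11+b13) (a12+b23)) (a13+b33))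
      (a22+b22) (max (a22+b23) (a23+b33)) (a33+b33)"

lemma mul_assoc: "mul (mul X Y) W = mul X (mul Y W)"
  by (cases X; cases Y; cases W) (simp add: max_add_distrib_left max_add_distrib_right ac_simps max.left_commute)

fun mk :: "ut \<Rightarrow> tmat" where
  "mk (U p11 p12 p13 p22 p23 p33) = (\<lambda>i j.
     if i = 1 \<and> j = 1 then ereal p11 else
     if i = 1 \<and> j = 2 then ereal p12 else
     if i = 1 \<and> j = 3 then ereal p13 else
     if i = 2 \<and> j = 2 then ereal p22 else
     if i = 2 \<and> j = 3 then ereal p23 else
     if i = 3 \<and> j = 3 then ereal p33 else -\<infinity>)"

lemma mk_inj: "mk X = mk Y \<Longrightarrow> X = Y"
proof -
  assume h: "mk X = mk Y"
  obtain a b c d e f where X: "X = U a b c d e f" by (cases X)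
  obtain a' b' c' d' e' f' where Y: "Y = U a' b' c' d' e' f'" by (cases Y)
  have "\<And>i j. mk X i j = mk Y i j" using h by simp
  from this[of 1 1] this[of 1 2] this[of 1 3] this[of 2 2] this[of 2 3] this[of 3 3]
  show ?thesis by (simp add: X Y)
qed

lemma atl13: "{1..3::nat} = {1,2,3}" by auto

lemma emax: "max (ereal a) (ereal b) = ereal (max a b)" by (simp add: max_def)

lemma tmult_expand: "tmult X Y i j = (if i \<in> {1..3} \<and> j \<in> {1..3}
   then max (X i 1 + Y 1 j) (max (X i 2 + Y 2 j) (X i 3 + Y 3 j)) else -\<infinity>)"
  unfolding tmult_def atl13 by simp

lemma i3: "(i::nat) \<in> {1..3} \<longleftrightarrow> i = 1 \<or> i = 2 \<or> i = 3" by auto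


lemma mk_vals:
  "mk (U p11 p12 p13 p22 p23 p33) 1 1 = ereal p11"
  "mk (U p11 p12 p13 p22 p23 p33) 1 2 = ereal p12"
  "mk (U p11 p12 p13 p22 p23 p33) 1 3 = ereal p13"
  "mk (U p11 p12 p13 p22 p23 p33) 2 2 = ereal p22"
  "mk (U p11 p12 p13 p22 p23 p33) 2 3 = ereal p23"
  "mk (U p11 p12 p13 p22 p23 p33) 3 3 = ereal p33"
  "mk (U p11 p12 p13 p22 p23 p33) 2 1 = -\<infinity>"
  "mk (U p11 p12 p13 p22 p23 p33) 3 1 = -\<infinity>"
  "mk (U p11 p12 p13 p22 p23 p33) 3 2 = -\<infinity>"
  by simp_all

lemma mk_out: "i \<notin> {1..3} \<or> j \<notin> {1..3} \<Longrightarrow> mk X i j = -\<infinity>"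
  by (cases X) auto


lemma tmult_mk: "tmult (mk X) (mk Y) = mk (mul X Y)"
proof -
  obtain a b c d e f where X: "X = U a b c d e f" by (cases X)
  obtain a' b' c' d' e' f' where Y: "Y = U a' b' c' d' e' f'" by (cases Y)
  show ?thesis
  proof (rule ext, rule ext)
    fix i j :: nat
    have "i \<notin> {1..3} \<or> j \<notin> {1..3} \<or> (i = 1 \<or> i = 2 \<or> i = 3) \<and> (j = 1 \<or> j = 2 \<or> j = 3)" by auto
    then show "tmult (mk X) (mk Y) i j = mk (mul X Y) i j"
    proof (elim disjE conjE)
      assume h: "i \<notin> {1..3}"
      then have "\<not> (i \<in> {1..3} \<and> j \<in> {1..3})" by blast
      then have "tmult (mk X) (mk Y) i j = -\<infinity>" unfolding tmult_def by (rule if_not_P)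
      then show ?thesis using mk_out[of i j "mul X Y"] h by simp
    next
      assume h: "j \<notin> {1..3}"
      then have "\<not> (i \<in> {1..3} \<and> j \<in> {1..3})" by blast
      then have "tmult (mk X) (mk Y) i j = -\<infinity>" unfolding tmult_def by (rule if_not_P)
      then show ?thesis using mk_out[of i j "mul X Y"] h by simp
    qed (simp_all only: X Y tmult_expand mul.simps mk_vals, simp_all add: max.assoc)
  qed
qed

lemma mk_eqI:
  assumes out: "\<And>i j. \<not> (i \<in> {1..3} \<and> j \<in> {1..3} \<and> i \<le> j) \<Longrightarrow> M i j = -\<infinity>"
    and "M 1 1 = ereal p11" "M 1 2 = ereal p12" "M 1 3 = ereal p13"
        "M 2 2 = ereal p22" "M 2 3 = ereal p23" "M 3 3 = ereal p33"
  shows "M = mk (U p11 p12 p13 p22 p23 p33)"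
proof (rule ext, rule ext)
  fix i j :: nat
  have "\<not> (i \<in> {1..3} \<and> j \<in> {1..3} \<and> i \<le> j) \<or> (i = 1 \<and> j = 1) \<or> (i = 1 \<and> j = 2) \<or> (i = 1 \<and> j = 3)
     \<or> (i = 2 \<and> j = 2) \<or> (i = 2 \<and> j = 3) \<or> (i = 3 \<and> j = 3)" by auto
  then show "M i j = mk (U p11 p12 p13 p22 p23 p33) i j"
  proof (elim disjE conjE)
    assume h: "\<not> (i \<in> {1..3} \<and> j \<in> {1..3} \<and> i \<le> j)"
    then have "mk (U p11 p12 p13 p22 p23 p33) i j = -\<infinity>" by auto
    then show ?thesis using out[OF h] by simp
  qed (simp_all only: assms mk_vals)
qed

definition ind :: "nat \<Rightarrow> nat \<Rightarrow> nat \<Rightarrow> real" where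
  "ind l i j = (if i \<le> l \<and> l \<le> j then 1 else 0)"

definition ta :: "nat \<Rightarrow> ut" where
  "ta l = U (ind l 1 1) (ind l 1 2) (ind l 1 3) (ind l 2 2) (ind l 2 3) (ind l 3 3)"

definition tc :: "nat \<Rightarrow> ut" where
  "tc l = U (if l = 3 then -1 else 0) 0 0 (if l = 2 then -1 else 0) 0 (if l = 1 then -1 else 0)"

definition Z :: ut where "Z = U 0 0 0 0 0 0"

lemma tA_mk: "tA l = mk (ta l)"
  unfolding ta_def by (rule mk_eqI) (auto simp: tA_def ind_def)

lemma tAcheck_mk: "tAcheck l = mk (tc l)"
  unfolding tc_def by (rule mk_eqI) (auto simp: tAcheck_def one_ereal_def)

lemma tE_mk: "tE = mk Z"
  unfolding Z_def by (rule mk_eqI) (auto simp: tE_def)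

definition G :: "(nat \<Rightarrow> ut) \<Rightarrow> nat list \<Rightarrow> ut \<Rightarrow> ut" where
  "G f w X = foldr (\<lambda>a M. mul (f a) M) w X"

lemma G_Nil[simp]: "G f [] X = X" by (simp add: G_def)
lemma G_Cons[simp]: "G f (a # w) X = mul (f a) (G f w X)" by (simp add: G_def)
lemma G_append[simp]: "G f (u @ v) X = G f u (G f v X)" by (simp add: G_def)

lemma mho_G: "mho w = mk (G ta w Z)"
  by (induction w) (simp_all add: mho_def tE_mk tA_mk tmult_mk)

lemma Omega_G: "Omega w = mk (G tc w Z)"
  by (induction w) (simp_all add: Omega_def tE_mk tAcheck_mk tmult_mk)

lemma rel_gen:
  assumes "mul (mul A B) C = mul (mul B A) C"
  shows "mul A (mul B (mul C W)) = mul B (mul A (mul C W))"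
  using assms by (metis mul_assoc)

lemma l123: "(x::nat) \<in> {1,2,3} \<Longrightarrow> x = 1 \<or> x = 2 \<or> x = 3" by auto

lemma rel1_ta: "x \<le> y \<Longrightarrow> y < z \<Longrightarrow> x \<in> {1,2,3} \<Longrightarrow> y \<in> {1,2,3} \<Longrightarrow> z \<in> {1,2,3} \<Longrightarrow>
   mul (mul (ta x) (ta z)) (ta y) = mul (mul (ta z) (ta x)) (ta y)"
  by (elim l123[elim_format] disjE) (simp_all add: ta_def ind_def)

lemma rel1_tc: "x \<le> y \<Longrightarrow> y < z \<Longrightarrow> x \<in> {1,2,3} \<Longrightarrow> y \<in> {1,2,3} \<Longrightarrow> z \<in> {1,2,3} \<Longrightarrow>
   mul (mul (tc x) (tc z)) (tc y) = mul (mul (tc z) (tc x)) (tc y)"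
  by (elim l123[elim_format] disjE) (simp_all add: tc_def)

lemma rel2_ta: "x < y \<Longrightarrow> y \<le> z \<Longrightarrow> x \<in> {1,2,3} \<Longrightarrow> y \<in> {1,2,3} \<Longrightarrow> z \<in> {1,2,3} \<Longrightarrow>
   mul (mul (ta y) (ta x)) (ta z) = mul (mul (ta y) (ta z)) (ta x)"
  by (elim l123[elim_format] disjE) (simp_all add: ta_def ind_def)

lemma rel2_tc: "x < y \<Longrightarrow> y \<le> z \<Longrightarrow> x \<in> {1,2,3} \<Longrightarrow> y \<in> {1,2,3} \<Longrightarrow> z \<in> {1,2,3} \<Longrightarrow>
   mul (mul (tc y) (tc x)) (tc z) = mul (mul (tc y) (tc z)) (tc x)"
  by (elim l123[elim_format] disjE) (simp_all add: tc_def)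

lemma knuth_set: "knuth_equiv u v \<Longrightarrow> set u = set v"
  by (induction rule: knuth_equiv.induct) auto

lemma knuth_G:
  assumes "knuth_equiv u v"
  shows "set u \<subseteq> {1,2,3} \<Longrightarrow> G ta u Z = G ta v Z \<and> G tc u Z = G tc v Z"
  using assms
proof (induction rule: knuth_equiv.induct)
  case (knu_refl w) then show ?case by simp
next
  case (knu_sym u v) then show ?case using knuth_set by metis
next
  case (knu_trans u v w) then show ?case using knuth_set by metis
next
  case (knu1 x y z p q)
  then have xyz: "x \<in> {1,2,3}" "y \<in> {1,2,3}" "z \<in> {1,2,3}" by auto
  have a: "mul (ta x) (mul (ta z) (mul (ta y) W)) = mul (ta z) (mul (ta x) (mul (ta y) W))" for W
    using rel_gen[OF rel1_ta[OF knu1(1,2) xyz]] .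
  have c: "mul (tc x) (mul (tc z) (mul (tc y) W)) = mul (tc z) (mul (tc x) (mul (tc y) W))" for W
    using rel_gen[OF rel1_tc[OF knu1(1,2) xyz]] .
  show ?case by (simp add: a c)
next
  case (knu2 x y z p q)
  then have xyz: "x \<in> {1,2,3}" "y \<in> {1,2,3}" "z \<in> {1,2,3}" by auto
  have a: "mul (ta y) (mul (ta x) (mul (ta z) W)) = mul (ta y) (mul (ta z) (mul (ta x) W))" for W
    using rel2_ta[OF knu2(1,2) xyz] by (metis mul_assoc)
  have c: "mul (tc y) (mul (tc x) (mul (tc z) W)) = mul (tc y) (mul (tc z) (mul (tc x) W))" for W
    using rel2_tc[OF knu2(1,2) xyz] by (metis mul_assoc)
  show ?case by (simp add: a c)
qed



declare knu_trans[trans]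

lemma kcong: "knuth_equiv u v \<Longrightarrow> knuth_equiv (p @ u @ q) (p @ v @ q)"
proof (induction rule: knuth_equiv.induct)
  case (knu_refl w) then show ?case by (rule knuth_equiv.knu_refl)
next
  case (knu_sym u v) show ?case using knu_sym.IH by (rule knuth_equiv.knu_sym)
next
  case (knu_trans u v w) show ?case using knu_trans.IH by (rule knuth_equiv.knu_trans)
next
  case (knu1 x y z p' q')
  then show ?case using knuth_equiv.knu1[of x y z "p @ p'" "q' @ q"] by simp
next
  case (knu2 x y z p' q')
  then show ?case using knuth_equiv.knu2[of x y z "p @ p'" "q' @ q"] by simp
qed

lemma kL: "knuth_equiv u v \<Longrightarrow> knuth_equiv (p @ u) (p @ v)"
  using kcong[of u v p "[]"] by simp
lemma kR: "knuth_equiv u v \<Longrightarrow> knuth_equiv (u @ q) (v @ q)"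
  using kcong[of u v "[]" q] by simp

lemma kA: "x < (z::nat) \<Longrightarrow> knuth_equiv (z # replicate c z @ [x]) (z # x # replicate c z)"
proof (induction c)
  case 0 then show ?case by (simp add: knu_refl)
next
  case (Suc c)
  have "knuth_equiv (z # replicate (Suc c) z @ [x]) ([z] @ (z # replicate c z @ [x]))" by (simp add: knu_refl)
  also have "knuth_equiv \<dots> ([z] @ (z # x # replicate c z))" by (rule kL) (rule Suc.IH[OF Suc.prems])
  also have "knuth_equiv \<dots> ([] @ [z, x, z] @ replicate c z)"
    using knu2[of x z z "[]" "replicate c z"] Suc.prems by (simp add: knu_sym)
  finally show ?case by simp
qed

lemma kB: "x < (z::nat) \<Longrightarrow> knuth_equiv (replicate b x @ [z, x]) (z # replicate (Suc b) x)"
proof (induction b)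
  case 0 then show ?case by (simp add: knu_refl)
next
  case (Suc b)
  have "knuth_equiv (replicate (Suc b) x @ [z, x]) ([x] @ (replicate b x @ [z, x]))" by (simp add: knu_refl)
  also have "knuth_equiv \<dots> ([x] @ (z # replicate (Suc b) x))" by (rule kL) (rule Suc.IH[OF Suc.prems])
  also have "knuth_equiv \<dots> ([] @ [z, x, x] @ replicate b x)"
    using knu1[of x x z "[]" "replicate b x"] Suc.prems by simp
  finally show ?case by simp
qed

lemma kC: "x \<le> y \<Longrightarrow> y < (z::nat) \<Longrightarrow> knuth_equiv (replicate a x @ [z, y]) (z # replicate a x @ [y])"
proof (cases a)
  case 0 then show ?thesis by (simp add: knu_refl)
next
  case (Suc a')
  assume xy: "x \<le> y" "y < z"
  have "knuth_equiv (replicate a x @ [z, y]) (replicate a' x @ [x, z, y] @ [])"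
    by (simp add: Suc replicate_append_same[symmetric] knu_refl)
  also have "knuth_equiv \<dots> (replicate a' x @ [z, x, y] @ [])" by (rule knu1) (use xy in auto)
  also have "knuth_equiv \<dots> ((replicate a' x @ [z, x]) @ [y])" by (simp add: knu_refl)
  also have "knuth_equiv \<dots> ((z # replicate (Suc a') x) @ [y])" by (rule kR) (rule kB, use xy in auto)
  finally show ?thesis by (simp add: Suc)
qed

lemma kD: "x < y \<Longrightarrow> y \<le> (z::nat) \<Longrightarrow> knuth_equiv (y # replicate c z @ [x]) (y # x # replicate c z)"
proof (cases c)
  case 0 then show ?thesis by (simp add: knu_refl)
next
  case (Suc c')
  assume xy: "x < y" "y \<le> z"
  have "knuth_equiv (y # replicate c z @ [x]) ([y] @ (z # replicate c' z @ [x]))" by (simp add: Suc knu_refl)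
  also have "knuth_equiv \<dots> ([y] @ (z # x # replicate c' z))" by (rule kL) (rule kA, use xy in auto)
  also have "knuth_equiv \<dots> ([] @ [y, x, z] @ replicate c' z)"
    using knu2[of x y z "[]" "replicate c' z"] xy by (simp add: knu_sym)
  finally show ?thesis by (simp add: Suc)
qed

abbreviation rp :: "nat \<Rightarrow> nat \<Rightarrow> nat list" where "rp k l \<equiv> replicate k l"

lemma L1: "knuth_equiv (rp a 1 @ rp b 2 @ rp (Suc c) 3 @ [2]) (3 # rp a 1 @ rp (Suc b) 2 @ rp c 3)"
proof -
  have "knuth_equiv (rp a 1 @ rp b 2 @ rp (Suc c) 3 @ [2]) ((rp a 1 @ rp b 2) @ (3 # rp c 3 @ [2]))" by (simp add: knu_refl)
  also have "knuth_equiv \<dots> ((rp a 1 @ rp b 2) @ (3 # 2 # rp c 3))" by (rule kL) (rule kA, simp)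
  also have "knuth_equiv \<dots> (rp a 1 @ (rp b 2 @ [3, 2]) @ rp c 3)" by (simp add: knu_refl)
  also have "knuth_equiv \<dots> (rp a 1 @ (3 # rp (Suc b) 2) @ rp c 3)" by (rule kcong) (rule kB, simp)
  also have "knuth_equiv \<dots> ((rp a 1 @ [3, 2]) @ rp b 2 @ rp c 3)" by (simp add: knu_refl)
  also have "knuth_equiv \<dots> ((3 # rp a 1 @ [2]) @ rp b 2 @ rp c 3)" by (rule kR) (rule kC, simp_all)
  finally show ?thesis by simp
qed

lemma L2: "knuth_equiv (rp a 1 @ rp (Suc b) 2 @ rp c 3 @ [1]) (2 # rp (Suc a) 1 @ rp b 2 @ rp c 3)"
proof -
  have "knuth_equiv (rp a 1 @ rp (Suc b) 2 @ rp c 3 @ [1]) ((rp a 1 @ rp b 2) @ (2 # rp c 3 @ [1]))"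
    by (simp add: replicate_append_same[symmetric] knu_refl)
  also have "knuth_equiv \<dots> ((rp a 1 @ rp b 2) @ (2 # 1 # rp c 3))" by (rule kL) (rule kD, simp_all)
  also have "knuth_equiv \<dots> (rp a 1 @ (2 # rp b 2 @ [1]) @ rp c 3)" by (simp add: knu_refl replicate_app_Cons_same)
  also have "knuth_equiv \<dots> (rp a 1 @ (2 # 1 # rp b 2) @ rp c 3)" by (rule kcong) (rule kA, simp)
  also have "knuth_equiv \<dots> ((rp a 1 @ [2, 1]) @ rp b 2 @ rp c 3)" by (simp add: knu_refl)
  also have "knuth_equiv \<dots> ((2 # rp (Suc a) 1) @ rp b 2 @ rp c 3)" by (rule kR) (rule kB, simp)
  finally show ?thesis by simp
qed

lemma L3: "knuth_equiv (rp a 1 @ rp (Suc c) 3 @ [1]) (3 # rp (Suc a) 1 @ rp c 3)"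
proof -
  have "knuth_equiv (rp a 1 @ rp (Suc c) 3 @ [1]) (rp a 1 @ (3 # rp c 3 @ [1]))" by (simp add: knu_refl)
  also have "knuth_equiv \<dots> (rp a 1 @ (3 # 1 # rp c 3))" by (rule kL) (rule kA, simp)
  also have "knuth_equiv \<dots> ((rp a 1 @ [3, 1]) @ rp c 3)" by (simp add: knu_refl)
  also have "knuth_equiv \<dots> ((3 # rp (Suc a) 1) @ rp c 3)" by (rule kR) (rule kB, simp)
  finally show ?thesis by simp
qed

definition R :: "nat \<Rightarrow> nat \<Rightarrow> nat \<Rightarrow> nat \<Rightarrow> nat \<Rightarrow> nat \<Rightarrow> nat list" where
  "R a b c d e f = rp f 3 @ rp d 2 @ rp e 3 @ rp a 1 @ rp b 2 @ rp c 3"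

definition valid :: "nat \<Rightarrow> nat \<Rightarrow> nat \<Rightarrow> nat \<Rightarrow> nat \<Rightarrow> nat \<Rightarrow> bool" where
  "valid a b c d e f \<longleftrightarrow> d \<le> a \<and> d + e \<le> a + b \<and> f \<le> d"


lemma ins:
  assumes v: "valid a b c d e f" and x: "x \<in> {1,2,3}"
  shows "\<exists>a' b' c' d' e' f'. valid a' b' c' d' e' f' \<and> knuth_equiv (R a b c d e f @ [x]) (R a' b' c' d' e' f')"
proof -
  consider "x = 3" | "x = 2" "c = 0" | c' where "x = 2" "c = Suc c'" | "x = 1" "b = 0" "c = 0"
    | c' where "x = 1" "b = 0" "c = Suc c'" | b' where "x = 1" "b = Suc b'" "e = 0"
    | b' e' where "x = 1" "b = Suc b'" "e = Suc e'"
    using x by (cases b; cases c; cases e) auto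
  then show ?thesis
  proof cases
    case 1
    have "R a b c d e f @ [x] = R a b (Suc c) d e f" by (simp add: 1 R_def replicate_append_same)
    then show ?thesis using v unfolding valid_def by (metis knu_refl)
  next
    case 2
    have "R a b c d e f @ [x] = R a (Suc b) c d e f" by (simp add: 2 R_def replicate_append_same)
    moreover have "valid a (Suc b) c d e f" using v by (simp add: valid_def)
    ultimately show ?thesis by (metis knu_refl)
  next
    case 3
    have "knuth_equiv (R a b c d e f @ [x]) ((rp f 3 @ rp d 2 @ rp e 3) @ (rp a 1 @ rp b 2 @ rp (Suc c') 3 @ [2]))"
      by (simp add: 3 R_def knu_refl)
    also have "knuth_equiv \<dots> ((rp f 3 @ rp d 2 @ rp e 3) @ (3 # rp a 1 @ rp (Suc b) 2 @ rp c' 3))"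
      by (rule kL) (rule L1)
    also have "\<dots> = R a (Suc b) c' d (Suc e) f" by (simp add: R_def replicate_app_Cons_same)
    finally have "knuth_equiv (R a b c d e f @ [x]) (R a (Suc b) c' d (Suc e) f)" .
    moreover have "valid a (Suc b) c' d (Suc e) f" using v by (simp add: valid_def)
    ultimately show ?thesis by blast
  next
    case 4
    have "R a b c d e f @ [x] = R (Suc a) b c d e f" by (simp add: 4 R_def replicate_append_same)
    moreover have "valid (Suc a) b c d e f" using v by (simp add: valid_def)
    ultimately show ?thesis by (metis knu_refl)
  next
    case 5
    have "knuth_equiv (R a b c d e f @ [x]) ((rp f 3 @ rp d 2 @ rp e 3) @ (rp a 1 @ rp (Suc c') 3 @ [1]))"
      by (simp add: 5 R_def knu_refl)
    also have "knuth_equiv \<dots> ((rp f 3 @ rp d 2 @ rp e 3) @ (3 # rp (Suc a) 1 @ rp c' 3))"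
      by (rule kL) (rule L3)
    also have "\<dots> = R (Suc a) 0 c' d (Suc e) f" by (simp add: R_def replicate_app_Cons_same)
    finally have "knuth_equiv (R a b c d e f @ [x]) (R (Suc a) 0 c' d (Suc e) f)" .
    moreover have "valid (Suc a) 0 c' d (Suc e) f" using v 5 by (simp add: valid_def)
    ultimately show ?thesis by blast
  next
    case 6
    have "knuth_equiv (R a b c d e f @ [x]) ((rp f 3 @ rp d 2) @ (rp a 1 @ rp (Suc b') 2 @ rp c 3 @ [1]))"
      by (simp add: 6 R_def knu_refl)
    also have "knuth_equiv \<dots> ((rp f 3 @ rp d 2) @ (2 # rp (Suc a) 1 @ rp b' 2 @ rp c 3))"
      by (rule kL) (rule L2)
    also have "\<dots> = R (Suc a) b' c (Suc d) 0 f" by (simp add: R_def replicate_app_Cons_same)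
    finally have "knuth_equiv (R a b c d e f @ [x]) (R (Suc a) b' c (Suc d) 0 f)" .
    moreover have "valid (Suc a) b' c (Suc d) 0 f" using v 6 by (simp add: valid_def)
    ultimately show ?thesis by blast
  next
    case 7
    have "knuth_equiv (R a b c d e f @ [x]) ((rp f 3 @ rp d 2 @ rp e 3) @ (rp a 1 @ rp (Suc b') 2 @ rp c 3 @ [1]))"
      by (simp add: 7 R_def knu_refl)
    also have "knuth_equiv \<dots> ((rp f 3 @ rp d 2 @ rp e 3) @ (2 # rp (Suc a) 1 @ rp b' 2 @ rp c 3))"
      by (rule kL) (rule L2)
    also have "\<dots> = rp f 3 @ (rp 0 1 @ rp d 2 @ rp (Suc e') 3 @ [2]) @ (rp (Suc a) 1 @ rp b' 2 @ rp c 3)"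
      by (simp add: 7)
    also have "knuth_equiv \<dots> (rp f 3 @ (3 # rp 0 1 @ rp (Suc d) 2 @ rp e' 3) @ (rp (Suc a) 1 @ rp b' 2 @ rp c 3))"
      by (rule kcong) (rule L1)
    also have "\<dots> = R (Suc a) b' c (Suc d) e' (Suc f)" by (simp add: R_def replicate_app_Cons_same)
    finally have "knuth_equiv (R a b c d e f @ [x]) (R (Suc a) b' c (Suc d) e' (Suc f))" .
    moreover have "valid (Suc a) b' c (Suc d) e' (Suc f)" using v 7 by (simp add: valid_def)
    ultimately show ?thesis by blast
  qed
qed

lemma normal_form:
  "set w \<subseteq> {1,2,3} \<Longrightarrow> \<exists>a b c d e f. valid a b c d e f \<and> knuth_equiv w (R a b c d e f)"
proof (induction w rule: rev_induct)
  case Nil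
  have "valid 0 0 0 0 0 0" by (simp add: valid_def)
  moreover have "R 0 0 0 0 0 0 = []" by (simp add: R_def)
  ultimately show ?case by (metis knu_refl)
next
  case (snoc x w)
  then obtain a b c d e f where v: "valid a b c d e f" and k: "knuth_equiv w (R a b c d e f)" by auto
  have x: "x \<in> {1,2,3}" using snoc.prems by auto
  obtain a' b' c' d' e' f' where v': "valid a' b' c' d' e' f'"
    and k': "knuth_equiv (R a b c d e f @ [x]) (R a' b' c' d' e' f')" using ins[OF v x] by blast
  have "knuth_equiv (w @ [x]) (R a b c d e f @ [x])" by (rule kR[OF k])
  also note k'
  finally show ?case using v' by blast
qed


fun cmono :: "ut \<Rightarrow> bool" where
  "cmono (U p11 p12 p13 p22 p23 p33) \<longleftrightarrow> p22 \<le> p12 \<and> p23 \<le> p13 \<and> p33 \<le> p23"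

fun scale :: "real \<Rightarrow> ut \<Rightarrow> ut" where
  "scale k (U p11 p12 p13 p22 p23 p33) = U (k*p11) (k*p12) (k*p13) (k*p22) (k*p23) (k*p33)"

lemma mul_zero_left: "cmono X \<Longrightarrow> mul (scale 0 Y) X = X"
  by (cases X; cases Y) (simp add: max_def)

lemma cmono_ta: "cmono X \<Longrightarrow> cmono (mul (ta a) X)"
  by (cases X) (auto simp: ta_def ind_def max_def)

lemma cmono_tc: "cmono X \<Longrightarrow> cmono (mul (tc a) X)"
  by (cases X) (auto simp: tc_def max_def)

lemma cmono_Z: "cmono Z" by (simp add: Z_def)

lemma cmono_Gta: "cmono (G ta w Z)"
  by (induction w) (simp_all add: cmono_Z cmono_ta)

lemma cmono_Gtc: "cmono (G tc w Z)"
  by (induction w) (simp_all add: cmono_Z cmono_tc)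


lemma stepA: "mul (ta l) (scale (real k) (ta l)) = scale (real (Suc k)) (ta l)"
  if "l = 1 \<or> l = 2 \<or> l = 3"
  using that by (elim disjE) (simp_all add: ta_def ind_def max_def algebra_simps)

lemma stepC: "mul (tc l) (scale (real k) (tc l)) = scale (real (Suc k)) (tc l)"
  if "l = 1 \<or> l = 2 \<or> l = 3"
  using that by (elim disjE) (simp_all add: tc_def max_def algebra_simps)

lemma powA: "l = 1 \<or> l = 2 \<or> l = 3 \<Longrightarrow> cmono X \<Longrightarrow> G ta (rp k l) X = mul (scale (real k) (ta l)) X"
proof (induction k)
  case 0 then show ?case by (simp add: mul_zero_left)
next
  case (Suc k)
  then show ?case by (simp add: mul_assoc[symmetric] stepA)
qed

lemma powC: "l = 1 \<or> l = 2 \<or> l = 3 \<Longrightarrow> cmono X \<Longrightarrow> G tc (rp k l) X = mul (scale (real k) (tc l)) X"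
proof (induction k)
  case 0 then show ?case by (simp add: mul_zero_left)
next
  case (Suc k)
  then show ?case by (simp add: mul_assoc[symmetric] stepC)
qed


lemma formA:
  assumes v: "valid a b c d e f"
  shows "G ta (R a b c d e f) Z = U (real a) (real a + real b) (real a + real b + real c) (real d + real b)
           (real d + max (real b) (real e) + real c) (real f + real e + real c)"
proof -
  have i: "real d \<le> real a" "real d + real e \<le> real a + real b" "real f \<le> real d"
    using v by (simp_all add: valid_def)
  have 1: "G ta (rp c 3) Z = U 0 0 (real c) 0 (real c) (real c)"
    by (simp add: powA Z_def ta_def ind_def)
  have 2: "G ta (rp b 2) (U 0 0 (real c) 0 (real c) (real c)) = U 0 (real b) (real b + real c) (real b) (real b + real c) (real c)"
    by (simp add: powA ta_def ind_def max_def)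
  have 3: "G ta (rp a 1) (U 0 (real b) (real b + real c) (real b) (real b + real c) (real c))
     = U (real a) (real a + real b) (real a + real b + real c) (real b) (real b + real c) (real c)"
    by (simp add: powA ta_def ind_def max_def)
  have 4: "G ta (rp e 3) (U (real a) (real a + real b) (real a + real b + real c) (real b) (real b + real c) (real c))
     = U (real a) (real a + real b) (real a + real b + real c) (real b) (max (real b) (real e) + real c) (real e + real c)"
    using i by (simp add: powA ta_def ind_def max_def)
  have 5: "G ta (rp d 2) (U (real a) (real a + real b) (real a + real b + real c) (real b) (max (real b) (real e) + real c) (real e + real c))
     = U (real a) (real a + real b) (real a + real b + real c) (real d + real b) (real d + max (real b) (real e) + real c) (real e + real c)"
    using i by (simp add: powA ta_def ind_def max_def)
  have 6: "G ta (rp f 3) (U (real a) (real a + real b) (real a + real b + real c) (real d + real b) (real d + max (real b) (real e) + real c) (real e + real c))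
     = U (real a) (real a + real b) (real a + real b + real c) (real d + real b) (real d + max (real b) (real e) + real c) (real f + real e + real c)"
    using i by (simp add: powA ta_def ind_def max_def)
  show ?thesis by (simp only: R_def G_append 1 2 3 4 5 6)
qed

lemma formC:
  assumes v: "valid a b c d e f"
  shows "G tc (R a b c d e f) Z = U (- (real f + real e + real c)) (- (real f + min (real e) (real b))) (- real f)
           (- (real d + real b)) (- real d) (- real a)"
proof -
  have i: "real d \<le> real a" "real d + real e \<le> real a + real b" "real f \<le> real d"
    using v by (simp_all add: valid_def)
  have 1: "G tc (rp c 3) Z = U (- real c) 0 0 0 0 0"
    by (simp add: powC Z_def tc_def max_def)
  have 2: "G tc (rp b 2) (U (- real c) 0 0 0 0 0) = U (- real c) 0 0 (- real b) 0 0"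
    by (simp add: powC tc_def max_def)
  have 3: "G tc (rp a 1) (U (- real c) 0 0 (- real b) 0 0) = U (- real c) 0 0 (- real b) 0 (- real a)"
    by (simp add: powC tc_def max_def)
  have 4: "G tc (rp e 3) (U (- real c) 0 0 (- real b) 0 (- real a))
     = U (- (real e + real c)) (- min (real e) (real b)) 0 (- real b) 0 (- real a)"
    by (simp add: powC tc_def max_def min_def)
  have 5: "G tc (rp d 2) (U (- (real e + real c)) (- min (real e) (real b)) 0 (- real b) 0 (- real a))
     = U (- (real e + real c)) (- min (real e) (real b)) 0 (- (real d + real b)) (- real d) (- real a)"
    using i by (simp add: powC tc_def max_def min_def)
  have 6: "G tc (rp f 3) (U (- (real e + real c)) (- min (real e) (real b)) 0 (- (real d + real b)) (- real d) (- real a))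
     = U (- (real f + real e + real c)) (- (real f + min (real e) (real b))) (- real f)
           (- (real d + real b)) (- real d) (- real a)"
    using i by (simp add: powC tc_def max_def min_def)
  show ?thesis by (simp only: R_def G_append 1 2 3 4 5 6)
qed


theorem mainTheorem15:
  fixes u v :: "nat list"
  assumes "set u \<subseteq> {1, 2, 3}" and "set v \<subseteq> {1, 2, 3}"
  shows "knuth_equiv u v \<longleftrightarrow> (mho u = mho v \<and> Omega u = Omega v)"
proof
  assume k: "knuth_equiv u v"
  from knuth_G[OF k assms(1)] show "mho u = mho v \<and> Omega u = Omega v" by (simp add: mho_G Omega_G)
next
  assume h: "mho u = mho v \<and> Omega u = Omega v"
  then have ga: "G ta u Z = G ta v Z" and gc: "G tc u Z = G tc v Z"
    by (auto simp: mho_G Omega_G dest: mk_inj)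
  obtain a b c d e f where v1: "valid a b c d e f" and k1: "knuth_equiv u (R a b c d e f)"
    using normal_form[OF assms(1)] by blast
  obtain a' b' c' d' e' f' where v2: "valid a' b' c' d' e' f'" and k2: "knuth_equiv v (R a' b' c' d' e' f')"
    using normal_form[OF assms(2)] by blast
  have "G ta (R a b c d e f) Z = G ta (R a' b' c' d' e' f') Z"
    using knuth_G[OF k1 assms(1)] knuth_G[OF k2 assms(2)] ga by simp
  then have A: "U (real a) (real a + real b) (real a + real b + real c) (real d + real b)
           (real d + max (real b) (real e) + real c) (real f + real e + real c)
      = U (real a') (real a' + real b') (real a' + real b' + real c') (real d' + real b')
           (real d' + max (real b') (real e') + real c') (real f' + real e' + real c')"
    by (simp only: formA[OF v1] formA[OF v2])
  have "G tc (R a b c d e f) Z = G tc (R a' b' c' d' e' f') Z"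
    using knuth_G[OF k1 assms(1)] knuth_G[OF k2 assms(2)] gc by simp
  then have C: "- real f = - real f'"
    by (simp add: formC[OF v1] formC[OF v2])
  from A C have "a = a'" "b = b'" "c = c'" "d = d'" "e = e'" "f = f'" by simp_all
  then have "R a b c d e f = R a' b' c' d' e' f'" by simp
  with k1 k2 show "knuth_equiv u v" by (metis knu_sym knu_trans)
qed

end
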